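(* Let $p=(p_1,\dots,p_n)$ be a sequence of positive integers with $\min_i p_i=2$, and let $I=\{i\in[n]: p_i=2\}$. For a set $W$ of functions $I\to[2]$ define $$A_W=\{x\in S_p:\ \exists f\in W \text{ with } x_i=f(i)\ \forall i\in I\},\qquad B_W=\{y\in S_p:\ \nexists f\in W \text{ with } y_i\ne f(i)\ \forall i\in I\}.$$ Then every cross-intersecting pair $A,B\subseteq S_p$ satisfies $|A|+|B|\le|S_p|$ and $|A|\cdot|B|\le|S_p|^2/4$; and a cross-intersecting pair $(A,B)$ satisfies $|A|\cdot|B|=|S_p|^2/4$ if and only if $A=A_W$ and $B=B_W$ for some set $W$ of functions $I\to[2]$ with $|W|=2^{|I|-1}$.
   Context: $[m]=\{1,\dots,m\}$. For a sequence of positive integers $p=(p_1,\dots,p_n)$, $S_p=[p_1]\times\cdots\times[p_n]$. Two vectors $x,y\in S_p$ intersect if $x_i=y_i$ for some $i\in[n]$; families $A,B\subseteq S_p$ are cross-intersecting if every $x\in A$ and $y\in B$ intersect. *)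

theory Defs
  imports Complex_Main "HOL-Library.FuncSet"
begin

definition Sp :: "nat list \<Rightarrow> nat list set" where
  "Sp p = {x. length x = length p \<and> (\<forall>i<length p. x ! i \<in> {1..p ! i})}"

definition intersects :: "nat list \<Rightarrow> nat list \<Rightarrow> bool" where
  "intersects x y \<longleftrightarrow> (\<exists>i<length x. i < length y \<and> x ! i = y ! i)"

definition cross_intersecting :: "nat list set \<Rightarrow> nat list set \<Rightarrow> bool" where
  "cross_intersecting A B \<longleftrightarrow> (\<forall>x\<in>A. \<forall>y\<in>B. intersects x y)"

definition twos :: "nat list \<Rightarrow> nat set" where
  "twos p = {i. i < length p \<and> p ! i = 2}"

definition A_W :: "nat list \<Rightarrow> (nat \<Rightarrow> nat) set \<Rightarrow> nat list set" where
  "A_W p W = {x \<in> Sp p. \<exists>f\<in>W. \<forall>i\<in>twos p. x ! i = f i}"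

definition B_W :: "nat list \<Rightarrow> (nat \<Rightarrow> nat) set \<Rightarrow> nat list set" where
  "B_W p W = {y \<in> Sp p. \<not> (\<exists>f\<in>W. \<forall>i\<in>twos p. y ! i \<noteq> f i)}"

end

theory Submission
  imports Defs
begin


definition sc :: "nat \<Rightarrow> nat \<Rightarrow> nat" where "sc m a = (if a < m then a+1 else 1)"
definition sg :: "nat list \<Rightarrow> (nat \<Rightarrow> nat \<Rightarrow> nat) \<Rightarrow> nat list \<Rightarrow> nat list" where
  "sg p g x = map (\<lambda>i. g i (x!i)) [0..<length p]"
definition good :: "nat list \<Rightarrow> (nat \<Rightarrow> nat \<Rightarrow> nat) \<Rightarrow> bool" where
  "good p g = (\<forall>i<length p. (\<forall>a\<in>{1..p!i}. g i a \<in> {1..p!i} \<and> g i a \<noteq> a) \<and> inj_on (g i) {1..p!i})"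

lemma sc_range: "2 \<le> m \<Longrightarrow> a \<in> {1..m} \<Longrightarrow> sc m a \<in> {1..m}"
  by (auto simp: sc_def)
lemma sc_ne: "2 \<le> m \<Longrightarrow> a \<in> {1..m} \<Longrightarrow> sc m a \<noteq> a"
  by (auto simp: sc_def)
lemma sc_inj: "inj_on (sc m) {1..m}"
  by (auto simp: sc_def inj_on_def split: if_splits)
lemma dc_ne: "3 \<le> m \<Longrightarrow> a \<in> {1..m} \<Longrightarrow> sc m (sc m a) \<noteq> a"
  by (auto simp: sc_def)

lemma good_sc: "\<forall>i<length p. 2 \<le> p!i \<Longrightarrow> good p (\<lambda>i. sc (p!i))"
  unfolding good_def using sc_range sc_ne sc_inj by blast

lemma good_dc: "\<forall>i<length p. 2 \<le> p!i \<Longrightarrow> 3 \<le> p!j \<Longrightarrow>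
   good p (\<lambda>i. if i = j then (\<lambda>a. sc (p!i) (sc (p!i) a)) else sc (p!i))"
  unfolding good_def
proof (intro allI impI conjI ballI)
  fix i a assume i: "i < length p" and a: "a \<in> {1..p!i}" and ge: "\<forall>i<length p. 2 \<le> p!i" and j: "3 \<le> p!j"
  show "(if i = j then \<lambda>a. sc (p ! i) (sc (p ! i) a) else sc (p ! i)) a \<in> {1..p ! i}"
    using sc_range[of "p!i"] ge i a by auto
  show "(if i = j then \<lambda>a. sc (p ! i) (sc (p ! i) a) else sc (p ! i)) a \<noteq> a"
    using sc_ne[of "p!i"] dc_ne[of "p!i"] ge i a j by auto
next
  fix i assume i: "i < length p" and ge: "\<forall>i<length p. 2 \<le> p!i" and j: "3 \<le> p!j"
  have "inj_on (\<lambda>a. sc (p ! i) (sc (p ! i) a)) {1..p!i}"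
    using sc_inj[of "p!i"] sc_range[of "p!i"] ge i unfolding inj_on_def by (metis)
  then show "inj_on (if i = j then \<lambda>a. sc (p ! i) (sc (p ! i) a) else sc (p ! i)) {1..p ! i}"
    using sc_inj by auto
qed

lemma sg_Sp: "good p g \<Longrightarrow> x \<in> Sp p \<Longrightarrow> sg p g x \<in> Sp p"
  by (auto simp: good_def Sp_def sg_def)

lemma sg_inj: "good p g \<Longrightarrow> inj_on (sg p g) (Sp p)"
proof (rule inj_onI)
  fix x y assume g: "good p g" and x: "x \<in> Sp p" and y: "y \<in> Sp p" and e: "sg p g x = sg p g y"
  show "x = y"
  proof (rule nth_equalityI)
    show "length x = length y" using x y by (simp add: Sp_def)
    fix i assume "i < length x"
    then have i: "i < length p" using x by (simp add: Sp_def)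
    have "g i (x!i) = g i (y!i)" using e i by (metis (no_types, lifting) sg_def nth_map_upt add_0 diff_zero)
    moreover have "inj_on (g i) {1..p!i}" using g i by (simp add: good_def)
    ultimately show "x!i = y!i" using x y i unfolding Sp_def inj_on_def by blast
  qed
qed

lemma sg_noint: assumes "good p g" "x \<in> Sp p" shows "\<not> intersects x (sg p g x)"
proof
  assume "intersects x (sg p g x)"
  then obtain i where i: "i < length x" "x!i = sg p g x ! i" unfolding intersects_def by auto
  have il: "i < length p" using i assms(2) by (simp add: Sp_def)
  then have "sg p g x ! i = g i (x!i)" by (simp add: sg_def)
  moreover have "x!i \<in> {1..p!i}" using assms(2) il by (simp add: Sp_def)
  ultimately show False using assms(1) il i(2) unfolding good_def by metis
qed

lemma finite_Sp: "finite (Sp p)"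
proof -
  have "Sp p \<subseteq> {xs. set xs \<subseteq> {0..Max (set p)} \<and> length xs = length p}"
  proof
    fix x assume x: "x \<in> Sp p"
    have "set x \<subseteq> {0..Max (set p)}"
    proof
      fix v assume "v \<in> set x"
      then obtain i where "i < length x" "v = x!i" by (metis in_set_conv_nth)
      moreover have "i < length p" using x \<open>i < length x\<close> by (simp add: Sp_def)
      ultimately have "v \<le> p!i" using x by (simp add: Sp_def)
      moreover have "p!i \<le> Max (set p)" using \<open>i < length p\<close> by simp
      ultimately show "v \<in> {0..Max (set p)}" by simp
    qed
    then show "x \<in> {xs. set xs \<subseteq> {0..Max (set p)} \<and> length xs = length p}" using x by (simp add: Sp_def)
  qed
  then show ?thesis using finite_lists_length_eq[of "{0..Max (set p)}"] finite_subset by blast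
qed

lemma disj: "good p g \<Longrightarrow> cross_intersecting A B \<Longrightarrow> A \<subseteq> Sp p \<Longrightarrow> sg p g ` A \<inter> B = {}"
  using sg_noint unfolding cross_intersecting_def by blast

lemma sum_bound: assumes "good p g" "A \<subseteq> Sp p" "B \<subseteq> Sp p" "cross_intersecting A B"
  shows "card A + card B \<le> card (Sp p)"
proof -
  have d: "sg p g ` A \<inter> B = {}" using disj assms by blast
  have c: "card (sg p g ` A) = card A" using sg_inj[OF assms(1)] assms(2) card_image inj_on_subset by metis
  have s: "sg p g ` A \<union> B \<subseteq> Sp p" using sg_Sp assms by blast
  have f: "finite (sg p g ` A)" "finite B" using finite_Sp assms finite_subset s by blast+
  have "card (sg p g ` A \<union> B) = card A + card B" using card_Un_disjoint[OF f d] c by simp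
  then show ?thesis using card_mono[OF finite_Sp s] by simp
qed

lemma eq_case: assumes "good p g" "A \<subseteq> Sp p" "B \<subseteq> Sp p" "cross_intersecting A B"
  "card A + card B = card (Sp p)"
  shows "B = Sp p - sg p g ` A"
proof -
  have d: "sg p g ` A \<inter> B = {}" using disj assms by blast
  have c: "card (sg p g ` A) = card A" using sg_inj[OF assms(1)] assms(2) card_image inj_on_subset by metis
  have s: "sg p g ` A \<subseteq> Sp p" using sg_Sp assms by blast
  have "card (Sp p - sg p g ` A) = card B" using card_Diff_subset[OF finite_subset[OF s finite_Sp] s] c assms(5) by simp
  moreover have "B \<subseteq> Sp p - sg p g ` A" using d assms(3) by blast
  ultimately show ?thesis using card_subset_eq finite_Diff finite_Sp by metis
qed



definition mg :: "nat list \<Rightarrow> (nat \<Rightarrow> nat) \<Rightarrow> nat list \<Rightarrow> nat list" where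
  "mg p f r = map (\<lambda>i. if i \<in> twos p then f i else r!i) [0..<length p]"
definition RR :: "nat list \<Rightarrow> nat list set" where
  "RR p = {x\<in>Sp p. \<forall>i\<in>twos p. x!i = 1}"

lemma twos_lt: "i \<in> twos p \<Longrightarrow> i < length p" by (simp add: twos_def)
lemma twos_2: "i \<in> twos p \<Longrightarrow> p!i = 2" by (simp add: twos_def)
lemma finite_twos: "finite (twos p)" unfolding twos_def by simp

lemma mg_len[simp]: "length (mg p f r) = length p" by (simp add: mg_def)
lemma mg_nth: "i < length p \<Longrightarrow> mg p f r ! i = (if i \<in> twos p then f i else r!i)"
  by (simp add: mg_def)

lemma mg_inj: "inj_on (\<lambda>(f,r). mg p f r) ((twos p \<rightarrow>\<^sub>E {1,2}) \<times> RR p)"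
proof (rule inj_onI)
  fix a b assume a: "a \<in> (twos p \<rightarrow>\<^sub>E {1,2}) \<times> RR p" and b: "b \<in> (twos p \<rightarrow>\<^sub>E {1,2}) \<times> RR p"
    and e0: "(\<lambda>(f,r). mg p f r) a = (\<lambda>(f,r). mg p f r) b"
  obtain f r where ab: "a = (f, r)" by (cases a)
  obtain f' r' where bb: "b = (f', r')" by (cases b)
  have f: "f \<in> twos p \<rightarrow>\<^sub>E {1,2}" and r: "r \<in> RR p" using a ab by auto
  have f': "f' \<in> twos p \<rightarrow>\<^sub>E {1,2}" and r': "r' \<in> RR p" using b bb by auto
  have e: "mg p f r = mg p f' r'" using e0 ab bb by simp
  have "f = f'"
  proof (rule ext)
    fix i show "f i = f' i"
    proof (cases "i \<in> twos p")
      case True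
      have "mg p f r ! i = f i" "mg p f' r' ! i = f' i" using mg_nth[OF twos_lt[OF True]] True by auto
      then show ?thesis using e by simp
    next
      case False
      have "f i = undefined" using PiE_arb[OF f False] .
      moreover have "f' i = undefined" using PiE_arb[OF f' False] .
      ultimately show ?thesis by simp
    qed
  qed
  moreover have "r = r'"
  proof (rule nth_equalityI)
    show "length r = length r'" using r r' by (simp add: RR_def Sp_def)
    fix i assume "i < length r"
    then have i: "i < length p" using r by (simp add: RR_def Sp_def)
    show "r!i = r'!i"
    proof (cases "i \<in> twos p")
      case True
      then show ?thesis using r r' unfolding RR_def by simp
    next
      case False
      then have "mg p f r ! i = r ! i" "mg p f' r' ! i = r' ! i" using mg_nth[OF i] by auto
      then show ?thesis using e by simp
    qed
  qed
  ultimately show "a = b" using ab bb by simp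
qed

lemma mg_img: assumes ge: "\<forall>i<length p. 2 \<le> p!i" and W: "W \<subseteq> twos p \<rightarrow>\<^sub>E {1,2}"
  shows "(\<lambda>(f,r). mg p f r) ` (W \<times> RR p) = A_W p W"
proof
  show "(\<lambda>(f,r). mg p f r) ` (W \<times> RR p) \<subseteq> A_W p W"
  proof clarify
    fix f r assume f: "f \<in> W" and r: "r \<in> RR p"
    have "mg p f r \<in> Sp p"
      unfolding Sp_def
    proof (clarsimp)
      fix i assume i: "i < length p"
      show "Suc 0 \<le> mg p f r ! i \<and> mg p f r ! i \<le> p ! i"
      proof (cases "i \<in> twos p")
        case True
        then have "f i \<in> {1,2}" using f W by blast
        then show ?thesis using True mg_nth[OF i] twos_2[OF True] by auto
      next
        case False
        then show ?thesis using r i mg_nth[OF i] by (simp add: RR_def Sp_def)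
      qed
    qed
    moreover have "\<forall>i\<in>twos p. mg p f r ! i = f i" using mg_nth twos_lt by simp
    ultimately show "mg p f r \<in> A_W p W" using f unfolding A_W_def by blast
  qed
next
  show "A_W p W \<subseteq> (\<lambda>(f,r). mg p f r) ` (W \<times> RR p)"
  proof
    fix x assume x: "x \<in> A_W p W"
    then obtain f where f: "f \<in> W" "\<forall>i\<in>twos p. x!i = f i" and xs: "x \<in> Sp p" unfolding A_W_def by blast
    define r where "r = mg p (\<lambda>_. 1) x"
    have "r \<in> Sp p" unfolding Sp_def
    proof (intro CollectI conjI allI impI)
      show "length r = length p" by (simp add: r_def)
      fix i assume i: "i < length p"
      show "r!i \<in> {1..p!i}"
      proof (cases "i \<in> twos p")
        case True then show ?thesis using i ge[rule_format, OF i] by (simp add: r_def mg_nth)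
      next
        case False then show ?thesis using i xs by (simp add: r_def mg_nth Sp_def)
      qed
    qed
    then have r: "r \<in> RR p" unfolding RR_def r_def using mg_nth twos_lt by auto
    have "x = mg p f r"
    proof (rule nth_equalityI)
      show "length x = length (mg p f r)" using xs by (simp add: Sp_def)
      fix i assume "i < length x"
      then have i: "i < length p" using xs by (simp add: Sp_def)
      show "x!i = mg p f r ! i" using f i by (simp add: mg_nth r_def)
    qed
    then show "x \<in> (\<lambda>(f,r). mg p f r) ` (W \<times> RR p)" using f r by blast
  qed
qed

lemma card_AW: assumes ge: "\<forall>i<length p. 2 \<le> p!i" and W: "W \<subseteq> twos p \<rightarrow>\<^sub>E {1,2}"
  shows "card (A_W p W) = card W * card (RR p)"
proof -
  have inj: "inj_on (\<lambda>(f,r). mg p f r) (W \<times> RR p)" by (rule inj_on_subset[OF mg_inj]) (use W in blast)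
  have "card (A_W p W) = card (W \<times> RR p)" using card_image[OF inj] mg_img[OF ge W] by simp
  then show ?thesis by (simp add: card_cartesian_product)
qed

lemma AW_full: "A_W p (twos p \<rightarrow>\<^sub>E {1,2}) = Sp p"
proof
  show "A_W p (twos p \<rightarrow>\<^sub>E {1, 2}) \<subseteq> Sp p" unfolding A_W_def by blast
  show "Sp p \<subseteq> A_W p (twos p \<rightarrow>\<^sub>E {1, 2})"
  proof
    fix x assume x: "x \<in> Sp p"
    have "restrict (\<lambda>i. x!i) (twos p) \<in> twos p \<rightarrow>\<^sub>E {1, 2}"
    proof
      fix i assume i: "i \<in> twos p"
      have "i < length p" using twos_lt[OF i] .
      then have "x!i \<in> {1..p!i}" using x unfolding Sp_def by blast
      then have "x!i \<in> {1..2}" using twos_2[OF i] by simp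
      then show "restrict (\<lambda>i. x!i) (twos p) i \<in> {1,2}" using i by auto
    qed auto
    moreover have "\<forall>i\<in>twos p. x!i = restrict (\<lambda>i. x!i) (twos p) i" by simp
    ultimately show "x \<in> A_W p (twos p \<rightarrow>\<^sub>E {1, 2})" unfolding A_W_def using x by blast
  qed
qed

lemma card_Sp: assumes ge: "\<forall>i<length p. 2 \<le> p!i"
  shows "card (Sp p) = 2 ^ card (twos p) * card (RR p)"
proof -
  have "card (twos p \<rightarrow>\<^sub>E {1::nat,2}) = 2 ^ card (twos p)"
    using card_PiE[OF finite_twos, of p "\<lambda>_. {1::nat,2}"] by (simp add: numeral_2_eq_2)
  then show ?thesis using card_AW[OF ge, of "twos p \<rightarrow>\<^sub>E {1,2}"] AW_full by simp
qed

lemma RR_ne: assumes "\<forall>i<length p. 2 \<le> p!i" shows "card (RR p) > 0"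
proof -
  have "replicate (length p) 1 \<in> RR p" using assms twos_lt by (auto simp: RR_def Sp_def)
  moreover have "RR p \<subseteq> Sp p" by (auto simp: RR_def)
  then have "finite (RR p)" using finite_Sp finite_subset by blast
  ultimately show ?thesis using card_gt_0_iff by blast
qed



abbreviation sig :: "nat list \<Rightarrow> nat list \<Rightarrow> nat list" where
  "sig p \<equiv> sg p (\<lambda>i. sc (p!i))"

lemma sg_nth: "i < length p \<Longrightarrow> sg p g x ! i = g i (x!i)" by (simp add: sg_def)
lemma sg_len[simp]: "length (sg p g x) = length p" by (simp add: sg_def)

lemma sig_surj: assumes ge: "\<forall>i<length p. 2 \<le> p!i" shows "sig p ` Sp p = Sp p"
  using endo_inj_surj[OF finite_Sp] sg_Sp[OF good_sc[OF ge]] sg_inj[OF good_sc[OF ge]] by blast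

lemma BW_eq: assumes ge: "\<forall>i<length p. 2 \<le> p!i" and W: "W \<subseteq> twos p \<rightarrow>\<^sub>E {1,2}"
  shows "B_W p W = Sp p - sig p ` A_W p W"
proof -
  have key: "(\<exists>f\<in>W. \<forall>i\<in>twos p. y!i \<noteq> f i) \<longleftrightarrow> y \<in> sig p ` A_W p W" if y: "y \<in> Sp p" for y
  proof
    assume "\<exists>f\<in>W. \<forall>i\<in>twos p. y!i \<noteq> f i"
    then obtain f where f: "f \<in> W" "\<forall>i\<in>twos p. y!i \<noteq> f i" by blast
    obtain x where x: "x \<in> Sp p" "y = sig p x" using y sig_surj[OF ge] by blast
    have "\<forall>i\<in>twos p. x!i = f i"
    proof
      fix i assume i: "i \<in> twos p"
      have il: "i < length p" using twos_lt[OF i] .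
      have p2: "p!i = 2" using twos_2[OF i] .
      have "x!i \<in> {1..p!i}" using x(1) il unfolding Sp_def by blast
      then have "x!i \<in> {1..2}" using p2 by simp
      moreover have "f i \<in> {1,2}" using f(1) W i by blast
      moreover have "y!i = sc 2 (x!i)" using x(2) il p2 by (simp add: sg_nth)
      moreover have "y!i \<noteq> f i" using f(2) i by blast
      ultimately show "x!i = f i" by (auto simp: sc_def split: if_splits)
    qed
    then have "x \<in> A_W p W" using x(1) f(1) unfolding A_W_def by blast
    then show "y \<in> sig p ` A_W p W" using x(2) by blast
  next
    assume "y \<in> sig p ` A_W p W"
    then obtain x where x: "x \<in> A_W p W" "y = sig p x" by blast
    then obtain f where f: "f \<in> W" "\<forall>i\<in>twos p. x!i = f i" and xs: "x \<in> Sp p" unfolding A_W_def by blast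
    have "\<forall>i\<in>twos p. y!i \<noteq> f i"
    proof
      fix i assume i: "i \<in> twos p"
      have il: "i < length p" using twos_lt[OF i] .
      have p2: "p!i = 2" using twos_2[OF i] .
      have "x!i \<in> {1..p!i}" using xs il unfolding Sp_def by blast
      then have "x!i \<in> {1..2}" using p2 by simp
      moreover have "y!i = sc 2 (x!i)" using x(2) il p2 by (simp add: sg_nth)
      ultimately show "y!i \<noteq> f i" using f(2) i sc_ne[of 2 "x!i"] by simp
    qed
    then show "\<exists>f\<in>W. \<forall>i\<in>twos p. y!i \<noteq> f i" using f(1) by blast
  qed
  show ?thesis
  proof
    show "B_W p W \<subseteq> Sp p - sig p ` A_W p W" using key unfolding B_W_def by blast
    show "Sp p - sig p ` A_W p W \<subseteq> B_W p W" using key unfolding B_W_def by blast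
  qed
qed

lemma closure_step:
  assumes ge: "\<forall>i<length p. 2 \<le> p!i" and AB: "A \<subseteq> Sp p" "B \<subseteq> Sp p" "cross_intersecting A B"
    and eq: "card A + card B = card (Sp p)" and j: "j < length p" "j \<notin> twos p" and x: "x \<in> A"
  shows "x[j := sc (p!j) (x!j)] \<in> A"
proof -
  have pj: "3 \<le> p!j" using ge j unfolding twos_def by force
  define g2 where "g2 = (\<lambda>i. if i = j then (\<lambda>a. sc (p!i) (sc (p!i) a)) else sc (p!i))"
  have G1: "good p (\<lambda>i. sc (p!i))" using good_sc[OF ge] .
  have G2: "good p g2" unfolding g2_def using good_dc[OF ge pj] .
  have e1: "B = Sp p - sig p ` A" using eq_case[OF G1 AB eq] .
  have e2: "B = Sp p - sg p g2 ` A" using eq_case[OF G2 AB eq] .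
  have s1: "sig p ` A \<subseteq> Sp p" using sg_Sp[OF G1] AB(1) by blast
  have s2: "sg p g2 ` A \<subseteq> Sp p" using sg_Sp[OF G2] AB(1) by blast
  have same: "sig p ` A = sg p g2 ` A" using e1 e2 s1 s2 by blast
  have xs: "x \<in> Sp p" using x AB(1) by blast
  define x' where "x' = x[j := sc (p!j) (x!j)]"
  have xj: "x!j \<in> {1..p!j}" using xs j by (simp add: Sp_def)
  have x's: "x' \<in> Sp p"
    unfolding Sp_def x'_def
  proof (intro CollectI conjI allI impI)
    show "length (x[j := sc (p ! j) (x ! j)]) = length p" using xs by (simp add: Sp_def)
    fix i assume i: "i < length p"
    show "x[j := sc (p ! j) (x ! j)] ! i \<in> {1..p ! i}"
    proof (cases "i = j")
      case True then show ?thesis using sc_range[of "p!j" "x!j"] ge j xj xs by (simp add: Sp_def)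
    next
      case False then show ?thesis using xs i by (simp add: Sp_def)
    qed
  qed
  have "sig p x' = sg p g2 x"
  proof (rule nth_equalityI)
    show "length (sig p x') = length (sg p g2 x)" by simp
    fix i assume "i < length (sig p x')"
    then have i: "i < length p" by simp
    have lx: "length x = length p" using xs by (simp add: Sp_def)
    show "sig p x' ! i = sg p g2 x ! i"
      using i lx by (cases "i = j") (simp_all add: sg_nth x'_def g2_def)
  qed
  moreover have "sg p g2 x \<in> sig p ` A" using same x by blast
  ultimately obtain a where a: "a \<in> A" "sig p a = sig p x'" by force
  have "a = x'" using sg_inj[OF G1] a AB(1) x's unfolding inj_on_def by blast
  then show ?thesis using a(1) x'_def by simp
qed

lemma reach:
  assumes A: "A \<subseteq> Sp p" and j: "j < length p" and pj: "2 \<le> p!j"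
    and step: "\<forall>x\<in>A. x[j := sc (p!j) (x!j)] \<in> A"
  shows "\<forall>x\<in>A. \<forall>v\<in>{1..p!j}. x[j := v] \<in> A"
proof -
  have sub: "\<forall>d. x!j + d \<le> p!j \<longrightarrow> x[j := x!j + d] \<in> A" if x: "x \<in> A" for x
  proof
    fix d show "x!j + d \<le> p!j \<longrightarrow> x[j := x!j + d] \<in> A"
    proof (induction d)
      case 0 then show ?case using x by simp
    next
      case (Suc d)
      show ?case
      proof
        assume le: "x ! j + Suc d \<le> p ! j"
        then have z: "x[j := x!j + d] \<in> A" using Suc by simp
        have lx: "length x = length p" using x A by (auto simp: Sp_def)
        have "(x[j := x!j + d]) ! j = x!j + d" using lx j by simp
        moreover have "sc (p!j) (x!j + d) = x!j + Suc d" using le by (simp add: sc_def)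
        ultimately have "(x[j := x!j + d])[j := sc (p!j) ((x[j := x!j + d]) ! j)] = x[j := x!j + Suc d]"
          by simp
        then show "x[j := x!j + Suc d] \<in> A" using step z by metis
      qed
    qed
  qed
  show ?thesis
  proof (intro ballI)
    fix x v assume x: "x \<in> A" and v: "v \<in> {1..p!j}"
    have lx: "length x = length p" using x A by (auto simp: Sp_def)
    have xj: "x!j \<in> {1..p!j}" using x A j by (auto simp: Sp_def)
    have "x!j + (p!j - x!j) = p!j" using xj by simp
    then have zm: "x[j := p!j] \<in> A" using sub[OF x, rule_format, of "p!j - x!j"] by simp
    have "(x[j := p!j])[j := sc (p!j) ((x[j := p!j]) ! j)] = x[j := 1]" using lx j by (simp add: sc_def)
    then have z1: "x[j := 1] \<in> A" using step zm by metis
    have "(x[j:=1])!j = 1" using lx j by simp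
    then have "(x[j:=1])[j := 1 + (v - 1)] \<in> A" using sub[OF z1] v by (metis atLeastAtMost_iff le_add_diff_inverse)
    then show "x[j := v] \<in> A" using v by simp
  qed
qed

lemma closure_all:
  assumes A: "A \<subseteq> Sp p"
    and cl: "\<forall>x\<in>A. \<forall>j<length p. j \<notin> twos p \<longrightarrow> (\<forall>v\<in>{1..p!j}. x[j := v] \<in> A)"
    and x: "x \<in> A" and y: "y \<in> Sp p" and agree: "\<forall>i\<in>twos p. y!i = x!i"
  shows "y \<in> A"
proof -
  define z where "z k = map (\<lambda>i. if i < k then y!i else x!i) [0..<length p]" for k
  have lx: "length x = length p" using x A by (auto simp: Sp_def)
  have ly: "length y = length p" using y by (auto simp: Sp_def)
  have "k \<le> length p \<longrightarrow> z k \<in> A" for k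
  proof (induction k)
    case 0
    have "z 0 = x" by (rule nth_equalityI) (simp_all add: z_def lx)
    then show ?case using x by simp
  next
    case (Suc k)
    show ?case
    proof
      assume k: "Suc k \<le> length p"
      then have zk: "z k \<in> A" using Suc by simp
      have eqz: "z (Suc k) = (z k)[k := y!k]"
        by (rule nth_equalityI) (auto simp: z_def nth_list_update less_Suc_eq)
      show "z (Suc k) \<in> A"
      proof (cases "k \<in> twos p")
        case True
        have "(z k) ! k = y!k" using True agree k by (simp add: z_def)
        then have "(z k)[k := y!k] = z k" by (metis list_update_id)
        then show ?thesis using eqz zk by simp
      next
        case False
        have "y!k \<in> {1..p!k}" using y k by (simp add: Sp_def)
        then show ?thesis using cl zk False k eqz by simp
      qed
    qed
  qed
  moreover have "z (length p) = y" by (rule nth_equalityI) (simp_all add: z_def ly)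
  ultimately show ?thesis by auto
qed



lemma amgm: fixes a b s :: real assumes "0 \<le> a" "0 \<le> b" "a + b \<le> s"
  shows "a * b \<le> s^2 / 4"
proof -
  have "(a+b)^2 \<le> s^2" using assms by (intro power_mono) auto
  moreover have "0 \<le> (a-b)^2" by simp
  ultimately show ?thesis by (simp add: power2_eq_square algebra_simps)
qed

lemma amgm_eq: fixes a b s :: real assumes "0 \<le> a" "0 \<le> b" "a + b \<le> s" "a * b = s^2 / 4"
  shows "a = s/2 \<and> b = s/2"
proof -
  have "(a+b)^2 \<le> s^2" using assms by (intro power_mono) auto
  then have "(a-b)^2 \<le> 0" using assms(4) by (simp add: power2_eq_square algebra_simps)
  then have ab: "a = b" by simp
  then have "(2*a)^2 = s^2" using assms(4) by (simp add: power2_eq_square algebra_simps)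
  moreover have "0 \<le> 2*a" "0 \<le> s" using assms by auto
  ultimately have "2*a = s" using power2_eq_iff_nonneg by blast
  then show ?thesis using ab by simp
qed

theorem mainTheorem12:
  fixes p :: "nat list"
  assumes "p \<noteq> []"
    and "\<forall>i<length p. p ! i > 0"
    and "Min (set p) = 2"
  shows "(\<forall>A B. A \<subseteq> Sp p \<and> B \<subseteq> Sp p \<and> cross_intersecting A B \<longrightarrow>
            card A + card B \<le> card (Sp p) \<and>
            real (card A) * real (card B) \<le> real (card (Sp p))^2 / 4)
       \<and> (\<forall>A B. A \<subseteq> Sp p \<and> B \<subseteq> Sp p \<and> cross_intersecting A B \<longrightarrow>
            (real (card A) * real (card B) = real (card (Sp p))^2 / 4 \<longleftrightarrow>
             (\<exists>W. W \<subseteq> (twos p \<rightarrow>\<^sub>E {1, 2}) \<and> card W = 2 ^ (card (twos p) - 1) \<and>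
                  A = A_W p W \<and> B = B_W p W)))"
proof -
  have ge: "\<forall>i<length p. 2 \<le> p!i"
    using assms(3) by (metis List.finite_set Min_le nth_mem)
  have "Min (set p) \<in> set p" using assms(1) by simp
  then obtain i0 where "i0 < length p" "p!i0 = 2" using assms(3) by (metis in_set_conv_nth)
  then have "i0 \<in> twos p" by (simp add: twos_def)
  then have k1: "card (twos p) \<ge> 1" using finite_twos by (metis One_nat_def Suc_leI card_gt_0_iff empty_iff)
  define k where "k = card (twos p)"
  define R where "R = card (RR p)"
  have R0: "R > 0" using RR_ne[OF ge] R_def by simp
  have cS: "card (Sp p) = 2 ^ k * R" using card_Sp[OF ge] k_def R_def by simp
  have pk: "(2::nat) ^ k = 2 * 2 ^ (k - 1)" using k1 k_def by (metis Suc_diff_le diff_Suc_1 power_Suc)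
  have G: "good p (\<lambda>i. sc (p!i))" using good_sc[OF ge] .
  have part1: "card A + card B \<le> card (Sp p)" if "A \<subseteq> Sp p" "B \<subseteq> Sp p" "cross_intersecting A B" for A B
    using sum_bound[OF G that] .
  show ?thesis
  proof (intro conjI allI impI)
    fix A B assume h: "A \<subseteq> Sp p \<and> B \<subseteq> Sp p \<and> cross_intersecting A B"
    show "card A + card B \<le> card (Sp p)" using part1 h by blast
    then have "real (card A) + real (card B) \<le> real (card (Sp p))" by (metis of_nat_add of_nat_le_iff)
    then show "real (card A) * real (card B) \<le> real (card (Sp p))^2 / 4"
      by (intro amgm) simp_all
  next
    fix A B assume h: "A \<subseteq> Sp p \<and> B \<subseteq> Sp p \<and> cross_intersecting A B"
    then have A: "A \<subseteq> Sp p" and B: "B \<subseteq> Sp p" and C: "cross_intersecting A B" by auto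
    have sb: "card A + card B \<le> card (Sp p)" using part1 A B C by blast
    show "real (card A) * real (card B) = real (card (Sp p))^2 / 4 \<longleftrightarrow>
             (\<exists>W. W \<subseteq> (twos p \<rightarrow>\<^sub>E {1, 2}) \<and> card W = 2 ^ (card (twos p) - 1) \<and>
                  A = A_W p W \<and> B = B_W p W)"
    proof
      assume prod: "real (card A) * real (card B) = real (card (Sp p))^2 / 4"
      have "real (card A) + real (card B) \<le> real (card (Sp p))" using sb by (metis of_nat_add of_nat_le_iff)
      then have "real (card A) = real (card (Sp p)) / 2 \<and> real (card B) = real (card (Sp p)) / 2"
        using amgm_eq[OF of_nat_0_le_iff of_nat_0_le_iff _ prod] by blast
      then have cA: "2 * card A = card (Sp p)" and cB: "2 * card B = card (Sp p)" by linarith+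
      then have eq: "card A + card B = card (Sp p)" by simp
      have step: "\<forall>x\<in>A. x[j := sc (p!j) (x!j)] \<in> A" if "j < length p" "j \<notin> twos p" for j
        using closure_step[OF ge A B C eq that] by blast
      have cl: "\<forall>x\<in>A. \<forall>j<length p. j \<notin> twos p \<longrightarrow> (\<forall>v\<in>{1..p!j}. x[j := v] \<in> A)"
        using reach[OF A _ _ step] ge by blast
      define W where "W = (\<lambda>a. restrict (\<lambda>i. a!i) (twos p)) ` A"
      have WP: "W \<subseteq> twos p \<rightarrow>\<^sub>E {1,2}"
      proof
        fix f assume "f \<in> W"
        then obtain a where a: "a \<in> A" "f = restrict (\<lambda>i. a!i) (twos p)" unfolding W_def by blast
        show "f \<in> twos p \<rightarrow>\<^sub>E {1,2}"
        proof
          fix i assume i: "i \<in> twos p"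
          have "a!i \<in> {1..p!i}" using a(1) A twos_lt[OF i] unfolding Sp_def by blast
          then show "f i \<in> {1,2}" using twos_2[OF i] a(2) i by auto
        qed (use a in auto)
      qed
      have AW: "A = A_W p W"
      proof
        show "A \<subseteq> A_W p W"
        proof
          fix x assume x: "x \<in> A"
          have "restrict (\<lambda>i. x!i) (twos p) \<in> W" using x W_def by blast
          moreover have "\<forall>i\<in>twos p. x!i = restrict (\<lambda>i. x!i) (twos p) i" by simp
          ultimately show "x \<in> A_W p W" unfolding A_W_def using x A by blast
        qed
        show "A_W p W \<subseteq> A"
        proof
          fix y assume "y \<in> A_W p W"
          then obtain f where y: "y \<in> Sp p" "f \<in> W" "\<forall>i\<in>twos p. y!i = f i" unfolding A_W_def by blast
          then obtain a where a: "a \<in> A" "f = restrict (\<lambda>i. a!i) (twos p)" unfolding W_def by blast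
          have "\<forall>i\<in>twos p. y!i = a!i" using y(3) a(2) by simp
          then show "y \<in> A" using closure_all[OF A cl a(1) y(1)] by blast
        qed
      qed
      have "B = Sp p - sig p ` A" using eq_case[OF G A B C eq] .
      then have BW: "B = B_W p W" using BW_eq[OF ge WP] AW by simp
      have "card A = card W * R" using card_AW[OF ge WP] AW R_def by simp
      then have "2 * (card W * R) = 2 ^ k * R" using cA cS by simp
      then have "2 * card W = 2 ^ k" using R0 by simp
      then have "card W = 2 ^ (card (twos p) - 1)" using pk k_def by simp
      then show "\<exists>W. W \<subseteq> (twos p \<rightarrow>\<^sub>E {1, 2}) \<and> card W = 2 ^ (card (twos p) - 1) \<and>
                  A = A_W p W \<and> B = B_W p W" using WP AW BW by blast
    next
      assume "\<exists>W. W \<subseteq> (twos p \<rightarrow>\<^sub>E {1, 2}) \<and> card W = 2 ^ (card (twos p) - 1) \<and>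
                  A = A_W p W \<and> B = B_W p W"
      then obtain W where WP: "W \<subseteq> twos p \<rightarrow>\<^sub>E {1, 2}" and cW: "card W = 2 ^ (k - 1)"
        and AW: "A = A_W p W" and BW: "B = B_W p W" using k_def by blast
      have cA: "card A = 2 ^ (k-1) * R" using card_AW[OF ge WP] AW R_def cW by simp
      have Bs: "B = Sp p - sig p ` A" using BW_eq[OF ge WP] AW BW by simp
      have s1: "sig p ` A \<subseteq> Sp p" using sg_Sp[OF G] A by blast
      have ci: "card (sig p ` A) = card A" using sg_inj[OF G] A card_image inj_on_subset by metis
      have "card B = card (Sp p) - card A"
        using Bs card_Diff_subset[OF finite_subset[OF s1 finite_Sp] s1] ci by simp
      then have cB: "card B = 2 ^ (k-1) * R" using cA cS pk by simp
      have "real (card (Sp p)) = 2 * real (2 ^ (k-1) * R)" using cS pk by simp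
      then show "real (card A) * real (card B) = real (card (Sp p))^2 / 4"
        using cA cB by (simp add: power2_eq_square)
    qed
  qed
qed

end
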